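(* Let $(W,S)$ be a finite Coxeter system with Poincaré polynomial $P(q)=\sum_{w\in W}q^{\ell(w)}$ and identity $e$, and for $w\in W$ let $g_w(q)=\sum_{\chi\in\operatorname{Irr}(W)}\chi(w)\,d_\chi(q)$, where $d_\chi(q)$ are the generic degrees of $W$. Then $g_e(q)=P(q)$, and $g_s(q)=(1-q)P(q)/(1+q)$ for every $s\in S$.
   Context: Let $W$ be a finite Coxeter group with set of distinguished generators $S$, length function $\ell(\cdot)$, identity $e$, and set of irreducible complex characters $\operatorname{Irr}(W)$. Let $K\subseteq\mathbb{C}$ be a splitting field for $W$, $q$ an indeterminate, and $\mathcal{H}$ the Hecke algebra of $W$ over $K(\sqrt q)$ with basis $T_w$ ($w\in W$) and relations $T_s^2=qT_e+(q-1)T_s$ for $s\in S$, and $T_xT_y=T_{xy}$ whenever $\ell(x)+\ell(y)=\ell(xy)$. $\mathcal{H}$ is split semisimple; each irreducible character $\tilde\chi$ of $\mathcal{H}$ satisfies $\tilde\chi(T_w)\in K[\sqrt q]$, and specializing $\sqrt q\mapsto 1$ in $\tilde\chi(T_w)$ gives $\chi(w)$ for a unique $\chi\in\operatorname{Irr}(W)$, giving a bijection $\chi\leftrightarrow\tilde\chi$. The generic degrees $d_\chi(q)$, $\chi\in\operatorname{Irr}(W)$, are the unique elements satisfying $\sum_{\chi\in\operatorname{Irr}(W)}\tilde\chi(T_w)d_\chi(q)=P(q)$ if $w=e$ and $=0$ if $w\neq e$. *)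

theory Defs
  imports "HOL-Algebra.Multiplicative_Group" "HOL-Algebra.Generated_Groups"
          "HOL-Computational_Algebra.Fraction_Field" "HOL-Computational_Algebra.Polynomial"
          "Jordan_Normal_Form.Matrix"
begin

definition wprod :: "('a, 'b) monoid_scheme \<Rightarrow> 'a list \<Rightarrow> 'a" where
  "wprod G ws = foldr (\<lambda>s acc. s \<otimes>\<^bsub>G\<^esub> acc) ws \<one>\<^bsub>G\<^esub>"

text \<open>The congruence on words over S generated by the Coxeter relations
  (s t)^m(s,t) = 1, where m(s,t) is the order of s t in G (for s = t this is s s = 1).
  W has the Coxeter presentation iff equality in G of word products implies this congruence.\<close>
inductive cox_eq :: "('a, 'b) monoid_scheme \<Rightarrow> 'a set \<Rightarrow> 'a list \<Rightarrow> 'a list \<Rightarrow> bool"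
  for G S where
  refl: "set u \<subseteq> S \<Longrightarrow> cox_eq G S u u"
| sym: "cox_eq G S u v \<Longrightarrow> cox_eq G S v u"
| trans: "cox_eq G S u v \<Longrightarrow> cox_eq G S v w \<Longrightarrow> cox_eq G S u w"
| ctxt: "cox_eq G S u v \<Longrightarrow> set x \<subseteq> S \<Longrightarrow> set y \<subseteq> S \<Longrightarrow> cox_eq G S (x @ u @ y) (x @ v @ y)"
| rel: "s \<in> S \<Longrightarrow> t \<in> S \<Longrightarrow>
        cox_eq G S (concat (replicate (group.ord G (s \<otimes>\<^bsub>G\<^esub> t)) [s, t])) []"

definition coxeter_system :: "('a, 'b) monoid_scheme \<Rightarrow> 'a set \<Rightarrow> bool" where
  "coxeter_system G S \<longleftrightarrow> group G \<and> S \<subseteq> carrier G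
     \<and> (\<forall>s\<in>S. s \<noteq> \<one>\<^bsub>G\<^esub> \<and> s \<otimes>\<^bsub>G\<^esub> s = \<one>\<^bsub>G\<^esub>)
     \<and> generate G S = carrier G
     \<and> (\<forall>u v. set u \<subseteq> S \<longrightarrow> set v \<subseteq> S \<longrightarrow> wprod G u = wprod G v \<longrightarrow> cox_eq G S u v)"

definition cox_len :: "('a, 'b) monoid_scheme \<Rightarrow> 'a set \<Rightarrow> 'a \<Rightarrow> nat" where
  "cox_len G S w = (LEAST n. \<exists>ws. length ws = n \<and> set ws \<subseteq> S \<and> wprod G ws = w)"

definition mtrace :: "'c::comm_monoid_add mat \<Rightarrow> 'c" where
  "mtrace A = (\<Sum>i<dim_row A. A $$ (i, i))"

definition is_subspace :: "nat \<Rightarrow> 'c::field vec set \<Rightarrow> bool" where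
  "is_subspace n U \<longleftrightarrow> U \<subseteq> carrier_vec n \<and> 0\<^sub>v n \<in> U
     \<and> (\<forall>u\<in>U. \<forall>v\<in>U. u + v \<in> U) \<and> (\<forall>c. \<forall>u\<in>U. c \<cdot>\<^sub>v u \<in> U)"

definition irreducible_family :: "nat \<Rightarrow> 'c::field mat set \<Rightarrow> bool" where
  "irreducible_family n M \<longleftrightarrow> n > 0 \<and>
     (\<forall>U. is_subspace n U \<longrightarrow> (\<forall>A\<in>M. \<forall>u\<in>U. A *\<^sub>v u \<in> U)
          \<longrightarrow> U = {0\<^sub>v n} \<or> U = carrier_vec n)"

definition group_rep :: "('a, 'b) monoid_scheme \<Rightarrow> nat \<Rightarrow> ('a \<Rightarrow> complex mat) \<Rightarrow> bool" where
  "group_rep G n \<rho> \<longleftrightarrow> (\<forall>w\<in>carrier G. \<rho> w \<in> carrier_mat n n) \<and> \<rho> \<one>\<^bsub>G\<^esub> = 1\<^sub>m n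
     \<and> (\<forall>x\<in>carrier G. \<forall>y\<in>carrier G. \<rho> (x \<otimes>\<^bsub>G\<^esub> y) = \<rho> x * \<rho> y)"

definition irr_chars :: "('a, 'b) monoid_scheme \<Rightarrow> ('a \<Rightarrow> complex) set" where
  "irr_chars G = {(\<lambda>w. if w \<in> carrier G then mtrace (\<rho> w) else 0) | n \<rho>.
      group_rep G n \<rho> \<and> irreducible_family n (\<rho> ` carrier G)}"

text \<open>Coefficient field: C(v) with v = sqrt q an indeterminate (K = C).\<close>
type_synonym hfield = "complex poly fract"

definition sqrtq :: hfield where "sqrtq = Fract [:0, 1:] 1"
definition qq :: hfield where "qq = sqrtq ^ 2"
definition cst :: "complex \<Rightarrow> hfield" where "cst c = Fract [:c:] 1"

text \<open>A representation of the Hecke algebra H on F^n, given by the images rho w of the basis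
  elements T_w.  Since H is spanned by the T_w and generated by the T_s, and left multiplication
  by T_s on the basis is T_s T_w = T_(sw) if l(sw) > l(w), and q T_(sw) + (q-1) T_w otherwise
  (a consequence of the defining relations), these conditions say exactly that the linear
  extension of rho is a unital algebra homomorphism H -> F^(n x n).\<close>
definition hecke_rep :: "('a, 'b) monoid_scheme \<Rightarrow> 'a set \<Rightarrow> nat \<Rightarrow> ('a \<Rightarrow> hfield mat) \<Rightarrow> bool" where
  "hecke_rep G S n \<rho> \<longleftrightarrow> (\<forall>w\<in>carrier G. \<rho> w \<in> carrier_mat n n) \<and> \<rho> \<one>\<^bsub>G\<^esub> = 1\<^sub>m n
     \<and> (\<forall>s\<in>S. \<forall>w\<in>carrier G. \<rho> s * \<rho> w =
          (if cox_len G S (s \<otimes>\<^bsub>G\<^esub> w) > cox_len G S w then \<rho> (s \<otimes>\<^bsub>G\<^esub> w)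
           else qq \<cdot>\<^sub>m \<rho> (s \<otimes>\<^bsub>G\<^esub> w) + (qq - 1) \<cdot>\<^sub>m \<rho> w))"

text \<open>Irreducible characters of H, recorded as the functions w \<mapsto> chi~(T_w).\<close>
definition hecke_irr_chars :: "('a, 'b) monoid_scheme \<Rightarrow> 'a set \<Rightarrow> ('a \<Rightarrow> hfield) set" where
  "hecke_irr_chars G S = {(\<lambda>w. if w \<in> carrier G then mtrace (\<rho> w) else 0) | n \<rho>.
      hecke_rep G S n \<rho> \<and> irreducible_family n (\<rho> ` carrier G)}"

text \<open>Specialisation sqrt q \<mapsto> 1 of a character with values in C[sqrt q].\<close>
definition specialize :: "('a, 'b) monoid_scheme \<Rightarrow> ('a \<Rightarrow> hfield) \<Rightarrow> ('a \<Rightarrow> complex)" where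
  "specialize G \<psi> = (\<lambda>w. if w \<in> carrier G then poly (THE p. \<psi> w = Fract p 1) 1 else 0)"

definition poincare :: "('a, 'b) monoid_scheme \<Rightarrow> 'a set \<Rightarrow> hfield" where
  "poincare G S = (\<Sum>w\<in>carrier G. qq ^ cox_len G S w)"

definition gfun :: "('a, 'b) monoid_scheme \<Rightarrow> (('a \<Rightarrow> complex) \<Rightarrow> hfield) \<Rightarrow> 'a \<Rightarrow> hfield" where
  "gfun G d w = (\<Sum>\<chi>\<in>irr_chars G. cst (\<chi> w) * d \<chi>)"

end

theory Submission
  imports Defs "Jordan_Normal_Form.Char_Poly"
begin

lemma coeff_linear_prod:
  fixes cs :: "'c::idom list"
  shows "degree (\<Prod>c\<leftarrow>cs. [:-c,1:]) = length cs \<and> coeff (\<Prod>c\<leftarrow>cs. [:-c,1:]) (length cs) = 1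
    \<and> (cs \<noteq> [] \<longrightarrow> coeff (\<Prod>c\<leftarrow>cs. [:-c,1:]) (length cs - 1) = - sum_list cs)"
proof (induction cs)
  case Nil
  then show ?case by simp
next
  case (Cons a cs)
  let ?r = "\<Prod>c\<leftarrow>cs. [:-c,1:]"
  have m: "(\<Prod>c\<leftarrow>a#cs. [:-c,1:]) = pCons 0 ?r - smult a ?r"
    by (simp add: algebra_simps)
  have r0: "?r \<noteq> 0" using Cons.IH by (metis one_neq_zero coeff_0)
  have dg: "degree (pCons 0 ?r - smult a ?r) = Suc (length cs)"
  proof -
    have "degree (smult a ?r) < degree (pCons 0 ?r)" using r0 Cons.IH
      by (metis degree_pCons_eq degree_smult_le le_imp_less_Suc)
    then show ?thesis using Cons.IH r0 by (metis degree_add_eq_left degree_minus diff_conv_add_uminus degree_pCons_eq)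
  qed
  have c1: "coeff (pCons 0 ?r - smult a ?r) (Suc (length cs)) = 1"
    using Cons.IH by (simp add: coeff_eq_0)
  have c2: "coeff (pCons 0 ?r - smult a ?r) (length cs) = - sum_list (a#cs)"
  proof (cases cs)
    case Nil then show ?thesis by simp
  next
    case (Cons b bs)
    then have "coeff (pCons 0 ?r - smult a ?r) (length cs) = coeff ?r (length cs - 1) - a * coeff ?r (length cs)"
      by simp
    then show ?thesis using Cons.IH \<open>cs = b # bs\<close> by simp
  qed
  show ?case unfolding m using dg c1 c2 by simp
qed

lemma card_fix_le:
  assumes p: "p permutes {0..<n}" and pid: "p \<noteq> id"
  shows "card {i\<in>{0..<n}. p i = i} \<le> n - 2"
proof -
  obtain i where pi: "p i \<noteq> i" using pid by (auto simp: fun_eq_iff)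
  have i: "i \<in> {0..<n}" using permutes_not_in[OF p] pi by blast
  have pin: "p i \<in> {0..<n}" using permutes_in_image[OF p] i by simp
  have ppi: "p (p i) \<noteq> p i"
  proof
    assume "p (p i) = p i"
    then have "p i = i" using permutes_inj[OF p] by (simp add: inj_eq)
    then show False using pi by simp
  qed
  have sub: "{i\<in>{0..<n}. p i = i} \<subseteq> {0..<n} - {i, p i}" using pi ppi by auto
  have c2: "card {i, p i} = 2" using pi by simp
  have "card ({0..<n} - {i, p i}) = n - 2"
    using card_Diff_subset[of "{i, p i}" "{0..<n}"] i pin c2 by simp
  then show ?thesis using card_mono[OF _ sub] by simp
qed

lemma char_poly_coeff_trace:
  fixes A :: "'c::idom mat"
  assumes A: "A \<in> carrier_mat n n" and n: "n > 0"
  shows "coeff (char_poly A) (n - 1) = - mtrace A"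
proof -
  define M where "M = char_poly_matrix A"
  have M: "M \<in> carrier_mat n n" using A unfolding M_def by simp
  have Me: "M $$ (i,j) = (if i = j then [:0,1:] else 0) + [:- A $$ (i,j):]" if "i < n" "j < n" for i j
    using A that unfolding M_def char_poly_matrix_def by simp
  have cp: "char_poly A = (\<Sum>p\<in>{p. p permutes {0..<n}}. signof p * (\<Prod>i=0..<n. M $$ (i, p i)))"
    unfolding char_poly_def M_def[symmetric] by (rule det_def'[OF M])
  have zero: "coeff (signof p * (\<Prod>i=0..<n. M $$ (i, p i))) (n - 1) = 0"
    if p: "p permutes {0..<n}" and pid: "p \<noteq> id" for p
  proof -
    have n2: "n \<ge> 2"
    proof -
      obtain i where pi: "p i \<noteq> i" using pid by (auto simp: fun_eq_iff)
      have i: "i \<in> {0..<n}" using permutes_not_in[OF p] pi by blast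
      have pin: "p i \<in> {0..<n}" using permutes_in_image[OF p] i by simp
      show ?thesis using i pin pi by simp
    qed
    have "degree (\<Prod>i=0..<n. M $$ (i, p i)) \<le> (\<Sum>i=0..<n. degree (M $$ (i, p i)))"
      using degree_prod_sum_le[of "{0..<n}" "\<lambda>i. M $$ (i, p i)"] by (simp add: o_def)
    also have "\<dots> \<le> (\<Sum>i=0..<n. (if p i = i then 1 else 0))"
    proof (rule sum_mono)
      fix i assume i: "i \<in> {0..<n}"
      then have pin: "p i < n" using permutes_in_image[OF p] by simp
      have ii: "i < n" using i by simp
      show "degree (M $$ (i, p i)) \<le> (if p i = i then 1 else 0)"
      proof (cases "p i = i")
        case True
        then show ?thesis unfolding Me[OF ii pin] by simp
      next
        case False
        then show ?thesis unfolding Me[OF ii pin] by simp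
      qed
    qed
    also have "\<dots> = card {i\<in>{0..<n}. p i = i}"
      by (simp add: sum.If_cases Int_def conj_commute)
    also have "\<dots> \<le> n - 2" by (rule card_fix_le[OF p pid])
    finally have "degree (signof p * (\<Prod>i=0..<n. M $$ (i, p i))) < n - 1"
      using n2 by simp
    then show ?thesis by (rule coeff_eq_0)
  qed
  have "coeff (char_poly A) (n - 1) = (\<Sum>p\<in>{p. p permutes {0..<n}}. coeff (signof p * (\<Prod>i=0..<n. M $$ (i, p i))) (n - 1))"
    unfolding cp coeff_sum ..
  also have "\<dots> = coeff (signof id * (\<Prod>i=0..<n. M $$ (i, id i))) (n - 1)"
  proof -
    have fin: "finite {p. p permutes {0..<n}}" by (simp add: finite_permutations)
    have idp: "id \<in> {p. p permutes {0..<n}}" by (simp add: permutes_id)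
    have r: "(\<Sum>p\<in>{p. p permutes {0..<n}} - {id}. coeff (signof p * (\<Prod>i=0..<n. M $$ (i, p i))) (n - 1)) = 0"
      by (rule sum.neutral) (use zero in blast)
    show ?thesis unfolding sum.remove[OF fin idp] r by simp
  qed
  also have "(\<Prod>i=0..<n. M $$ (i, id i)) = (\<Prod>i=0..<n. [:- A $$ (i,i), 1:])"
    by (rule prod.cong) (simp_all add: Me)
  also have "signof (id :: nat \<Rightarrow> nat) = 1" by simp
  also have "(\<Prod>i=0..<n. [:- A $$ (i,i), 1:]) = (\<Prod>c\<leftarrow>map (\<lambda>i. A $$ (i,i)) [0..<n]. [:-c,1:])"
    using prod.distinct_set_conv_list[of "[0..<n]" "\<lambda>i. [:- A $$ (i,i), 1:]"] by (simp add: o_def)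
  also have "coeff (1 * \<dots>) (n - 1) = - sum_list (map (\<lambda>i. A $$ (i,i)) [0..<n])"
    using coeff_linear_prod[of "map (\<lambda>i. A $$ (i,i)) [0..<n]"] n by simp
  also have "\<dots> = - mtrace A" unfolding mtrace_def using A
    by (simp add: sum_list_sum_nth atLeast0LessThan)
  finally show ?thesis .
qed

lemma quad_mat_char_poly:
  fixes X :: "'c::field mat"
  assumes X: "X \<in> carrier_mat n n" and rel: "X * X = q \<cdot>\<^sub>m 1\<^sub>m n + (q - 1) \<cdot>\<^sub>m X"
  shows "char_poly X * char_poly ((q - 1) \<cdot>\<^sub>m 1\<^sub>m n - X) = ([:-q,1:] * [:1,1:]) ^ n"
proof -
  define B where "B = (q - 1) \<cdot>\<^sub>m 1\<^sub>m n - X"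
  have Bc: "B \<in> carrier_mat n n" using X unfolding B_def by auto
  define M1 where "M1 = char_poly_matrix X"
  define M2 where "M2 = char_poly_matrix B"
  have M1c: "M1 \<in> carrier_mat n n" using X unfolding M1_def by simp
  have M2c: "M2 \<in> carrier_mat n n" using Bc unfolding M2_def by simp
  have M1e: "M1 $$ (i,k) = (if i = k then [:0,1:] else 0) + [:- X $$ (i,k):]" if "i < n" "k < n" for i k
    using X that unfolding M1_def char_poly_matrix_def by auto
  have M2e: "M2 $$ (k,j) = (if k = j then [:0,1:] - [:q - 1:] else 0) + [:X $$ (k,j):]" if "k < n" "j < n" for k j
    using X that unfolding M2_def B_def char_poly_matrix_def by auto
  have XX: "(\<Sum>k=0..<n. X $$ (i,k) * X $$ (k,j)) = (if i = j then q else 0) + (q - 1) * X $$ (i,j)"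
    if "i < n" "j < n" for i j
  proof -
    have "(X * X) $$ (i,j) = (\<Sum>k=0..<n. X $$ (i,k) * X $$ (k,j))"
      using X that by (simp add: scalar_prod_def)
    also have "(X * X) $$ (i,j) = (if i = j then q else 0) + (q - 1) * X $$ (i,j)"
      unfolding rel using X that by simp
    finally show ?thesis by simp
  qed
  have prod: "M1 * M2 = ([:-q,1:] * [:1,1:]) \<cdot>\<^sub>m 1\<^sub>m n"
  proof (rule eq_matI)
    fix i j assume i: "i < dim_row (([:-q,1:] * [:1,1:]) \<cdot>\<^sub>m 1\<^sub>m n)" and j: "j < dim_col (([:-q,1:] * [:1,1:]) \<cdot>\<^sub>m 1\<^sub>m n)"
    then have i: "i < n" and j: "j < n" by auto
    have "(M1 * M2) $$ (i,j) = (\<Sum>k=0..<n. M1 $$ (i,k) * M2 $$ (k,j))"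
      using M1c M2c i j by (simp add: scalar_prod_def)
    also have "\<dots> = (\<Sum>k=0..<n. ((if i = k then [:0,1:] else 0) + [:- X $$ (i,k):]) *
        ((if k = j then [:0,1:] - [:q - 1:] else 0) + [:X $$ (k,j):]))"
      by (rule sum.cong) (auto simp: M1e M2e i j)
    also have "\<dots> = (\<Sum>k=0..<n. (if i = k then [:0,1:] else 0) * (if k = j then [:0,1:] - [:q - 1:] else 0))
        + (\<Sum>k=0..<n. (if i = k then [:0,1:] * [:X $$ (k,j):] else 0))
        + (\<Sum>k=0..<n. (if k = j then [:- X $$ (i,k):] * ([:0,1:] - [:q - 1:]) else 0))
        - [:(\<Sum>k=0..<n. X $$ (i,k) * X $$ (k,j)):]"
    proof -
      have pt: "((if i = k then [:0,1:] else 0) + [:- X $$ (i,k):]) *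
        ((if k = j then [:0,1:] - [:q - 1:] else 0) + [:X $$ (k,j):])
        = (if i = k then [:0,1:] else 0) * (if k = j then [:0,1:] - [:q - 1:] else 0)
        + (if i = k then [:0,1:] * [:X $$ (k,j):] else 0)
        + (if k = j then [:- X $$ (i,k):] * ([:0,1:] - [:q - 1:]) else 0)
        - [:X $$ (i,k) * X $$ (k,j):]" for k
        by (cases "i = k"; cases "k = j") (simp_all add: algebra_simps mult_to_poly)
      show ?thesis unfolding pt sum.distrib sum_subtractf sum_to_poly ..
    qed
    also have "\<dots> = (if i = j then [:-q,1:] * [:1,1:] else 0)"
    proof -
      have s1: "(\<Sum>k=0..<n. (if i = k then [:0,1:] else 0) * (if k = j then [:0,1:] - [:q - 1:] else 0))
          = (if i = j then [:0,1:] * ([:0,1:] - [:q - 1:]) else 0)"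
      proof -
        have "(\<Sum>k=0..<n. (if i = k then [:0,1:] else 0) * (if k = j then [:0,1:] - [:q - 1:] else 0))
          = (\<Sum>k=0..<n. (if k = i then (if i = j then [:0,1:] * ([:0,1:] - [:q - 1:]) else 0) else 0))"
          by (rule sum.cong) auto
        also have "\<dots> = (if i = j then [:0,1:] * ([:0,1:] - [:q - 1:]) else 0)" using i by simp
        finally show ?thesis .
      qed
      have s2: "(\<Sum>k=0..<n. (if i = k then [:0,1:] * [:X $$ (k,j):] else 0)) = [:0,1:] * [:X $$ (i,j):]"
        using i by (simp add: sum.delta)
      have s3: "(\<Sum>k=0..<n. (if k = j then [:- X $$ (i,k):] * ([:0,1:] - [:q - 1:]) else 0))
          = [:- X $$ (i,j):] * ([:0,1:] - [:q - 1:])"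
        using j by (simp add: sum.delta')
      have s4: "[:(\<Sum>k=0..<n. X $$ (i,k) * X $$ (k,j)):] = [:(if i = j then q else 0):] + [:q - 1:] * [:X $$ (i,j):]"
        using XX[OF i j] by (simp add: mult_to_poly)
      show ?thesis unfolding s1 s2 s3 s4
        by (cases "i = j") (simp_all add: algebra_simps)
    qed
    also have "\<dots> = (([:-q,1:] * [:1,1:]) \<cdot>\<^sub>m 1\<^sub>m n) $$ (i,j)" using i j by simp
    finally show "(M1 * M2) $$ (i,j) = (([:-q,1:] * [:1,1:]) \<cdot>\<^sub>m 1\<^sub>m n) $$ (i,j)" .
  qed (use M1c M2c in auto)
  have "char_poly X * char_poly B = det (M1 * M2)"
    unfolding char_poly_def M1_def M2_def by (rule det_mult[symmetric, of _ n]) (use X Bc in auto)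
  also have "\<dots> = ([:-q,1:] * [:1,1:]) ^ n" unfolding prod det_smult det_one by simp
  finally show ?thesis unfolding B_def .
qed

lemma decomp2:
  fixes f :: "'c::field poly"
  assumes f0: "f \<noteq> 0"
  shows "\<exists>k m g. f = [:-q,1:] ^ k * [:1,1:] ^ m * g \<and> poly g q \<noteq> 0 \<and> poly g (-1) \<noteq> 0"
proof -
  obtain f1 where f1: "f = [:-q,1:] ^ order q f * f1" and nd1: "\<not> [:-q,1:] dvd f1"
    using order_decomp[OF f0] by blast
  have f10: "f1 \<noteq> 0" using f0 f1 by auto
  obtain g where g: "f1 = [:-(-1),1:] ^ order (-1) f1 * g" and nd2: "\<not> [:-(-1),1:] dvd g"
    using order_decomp[OF f10] by blast
  have pf1: "poly f1 q \<noteq> 0" using nd1 poly_eq_0_iff_dvd by blast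
  have pg1: "poly g (-1) \<noteq> 0" using nd2 poly_eq_0_iff_dvd by blast
  have pg2: "poly g q \<noteq> 0" using pf1 g by (metis mult_zero_right poly_mult)
  show ?thesis using f1 g pg1 pg2 by (intro exI[of _ "order q f"] exI[of _ "order (-1) f1"] exI[of _ g]) (simp add: mult.assoc)
qed

lemma split_prod:
  fixes c :: "'c::field poly"
  assumes eq: "c * d = [:-q,1:] ^ n * [:1,1:] ^ n" and mon: "lead_coeff c = 1" and q: "q \<noteq> -1"
  shows "\<exists>a b. c = [:-q,1:] ^ a * [:1,1:] ^ b"
proof -
  let ?P = "[:-q,1:]" and ?Q = "[:1,1::'c:]"
  have P0: "?P ^ j \<noteq> 0" for j by simp
  have Q0: "?Q ^ j \<noteq> 0" for j by simp
  have c0: "c \<noteq> 0" using mon by auto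
  have d0: "d \<noteq> 0" using eq by (metis P0 Q0 mult_eq_0_iff mult_zero_right)
  obtain k m g where c: "c = ?P ^ k * ?Q ^ m * g" and g1: "poly g q \<noteq> 0" and g2: "poly g (-1) \<noteq> 0"
    using decomp2[OF c0] by blast
  obtain k' m' h where d: "d = ?P ^ k' * ?Q ^ m' * h" and h1: "poly h q \<noteq> 0" and h2: "poly h (-1) \<noteq> 0"
    using decomp2[OF d0] by blast
  have re: "c * d = ?P ^ (k + k') * ?Q ^ (m + m') * (g * h)"
    unfolding c d by (simp add: power_add algebra_simps)
  have gh0: "g * h \<noteq> 0" using g1 h1 by auto
  have oQq: "order q (?Q ^ j) = 0" for j
    by (rule order_0I) (use q in \<open>auto simp: add_eq_0_iff\<close>)
  have oPm: "order (-1) (?P ^ j) = 0" for j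
    by (rule order_0I) (use q in \<open>auto simp: add_eq_0_iff minus_equation_iff\<close>)
  have oQm: "order (-1) (?Q ^ j) = j" for j
    using order_power_n_n[of "-1" j] by simp
  have ogh1: "order q (g * h) = 0" by (rule order_0I) (use g1 h1 in simp)
  have ogh2: "order (-1) (g * h) = 0" by (rule order_0I) (use g2 h2 in simp)
  have nz: "?P ^ (k + k') * ?Q ^ (m + m') * (g * h) \<noteq> 0" using gh0 by simp
  have "order q (c * d) = k + k'"
    unfolding re using nz gh0 by (simp add: order_mult order_power_n_n oQq ogh1)
  moreover have "order q (c * d) = n"
    unfolding eq by (simp add: order_mult order_power_n_n oQq)
  ultimately have kk: "k + k' = n" by simp
  have "order (-1) (c * d) = m + m'"
    unfolding re using nz gh0 by (simp add: order_mult oPm oQm ogh2)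
  moreover have "order (-1) (c * d) = n"
    unfolding eq by (simp add: order_mult oPm oQm)
  ultimately have mm: "m + m' = n" by simp
  have "?P ^ n * ?Q ^ n * (g * h) = ?P ^ n * ?Q ^ n * 1" using eq re kk mm by simp
  then have "g * h = 1" by (subst (asm) mult_left_cancel) simp_all
  then have "g dvd 1" by (metis dvdI)
  then obtain u where u: "g = [:u:]" using is_unit_poly_iff by blast
  have "lead_coeff c = lead_coeff g"
    using c by (simp add: lead_coeff_mult lead_coeff_power)
  then have "g = 1" using mon u by (simp add: one_pCons)
  then show ?thesis using c by (metis mult_1_right)
qed

lemma trace_quad:
  fixes X :: "'c::field mat"
  assumes X: "X \<in> carrier_mat n n" and rel: "X * X = q \<cdot>\<^sub>m 1\<^sub>m n + (q - 1) \<cdot>\<^sub>m X" and n: "n > 0"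
    and q: "q \<noteq> -1"
  shows "\<exists>a b. a + b = n \<and> mtrace X = of_nat a * q - of_nat b"
proof -
  have dv: "char_poly X * char_poly ((q - 1) \<cdot>\<^sub>m 1\<^sub>m n - X) = [:-q,1:] ^ n * [:1,1:] ^ n"
    using quad_mat_char_poly[OF X rel] by (metis power_mult_distrib)
  have dm: "degree (char_poly X) = n \<and> coeff (char_poly X) n = 1" by (rule degree_monic_char_poly[OF X])
  then obtain a b where ab: "char_poly X = [:-q,1:] ^ a * [:1,1:] ^ b"
    using split_prod[OF dv _ q] by auto
  define cs where "cs = replicate a q @ replicate b (-1)"
  have cs: "char_poly X = (\<Prod>c\<leftarrow>cs. [:-c,1:])"
    unfolding ab cs_def by simp
  have lc: "length cs = a + b" unfolding cs_def by simp
  from coeff_linear_prod[of cs] cs dm have abn: "a + b = n" using lc by simp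
  have "coeff (char_poly X) (n - 1) = - sum_list cs"
    using coeff_linear_prod[of cs] cs lc abn n by auto
  then have "mtrace X = sum_list cs" using char_poly_coeff_trace[OF X n] by simp
  also have "\<dots> = of_nat a * q - of_nat b" unfolding cs_def by (simp add: sum_list_replicate)
  finally show ?thesis using abn by blast
qed

lemma fract_inj1: "Fract (p::'c::idom) 1 = Fract p' 1 \<longleftrightarrow> p = p'"
  by (simp add: eq_fract)

lemma spec_val:
  assumes "w \<in> carrier G" and "\<psi> w = Fract p 1"
  shows "specialize G \<psi> w = poly p 1"
proof -
  have "(THE p'. \<psi> w = Fract p' 1) = p"
    using assms(2) by (rule the_equality) (metis assms(2) fract_inj1)
  then show ?thesis using assms(1) unfolding specialize_def by simp
qed

lemma qq_fract: "qq = Fract [:0,0,1:] 1"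
  unfolding qq_def sqrtq_def by (simp add: power2_eq_square)

lemma qq_ne: "1 + qq \<noteq> 0" "qq \<noteq> -1"
proof -
  have e: "(1::complex poly) + [:0,0,1:] = [:1,0,1:]" by (simp add: one_pCons)
  have "1 + qq = Fract [:1,0,1:] 1" unfolding qq_fract One_fract_def by (simp add: e)
  moreover have "Fract [:1,0,1::complex:] 1 \<noteq> 0" unfolding Zero_fract_def fract_inj1 by simp
  ultimately show "1 + qq \<noteq> 0" by simp
  then show "qq \<noteq> -1" by (metis add.commute add.right_inverse)
qed

lemma cox_len_one:
  assumes "coxeter_system G S"
  shows "cox_len G S \<one>\<^bsub>G\<^esub> = 0"
  unfolding cox_len_def
  by (rule Least_eq_0) (rule exI[of _ "[]"], simp add: wprod_def)

lemma mtrace_one: "mtrace (1\<^sub>m n :: 'c::comm_ring_1 mat) = of_nat n"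
  unfolding mtrace_def by simp

lemma hecke_char_one:
  assumes cox: "coxeter_system G S" and psi: "\<psi> \<in> hecke_irr_chars G S"
  shows "\<exists>n. \<psi> \<one>\<^bsub>G\<^esub> = of_nat n"
proof -
  obtain n \<rho> where rep: "hecke_rep G S n \<rho>"
      and ps: "\<psi> = (\<lambda>w. if w \<in> carrier G then mtrace (\<rho> w) else 0)"
    using psi unfolding hecke_irr_chars_def by blast
  have grp: "group G" using cox unfolding coxeter_system_def by simp
  then have "\<one>\<^bsub>G\<^esub> \<in> carrier G" by (simp add: group.is_monoid monoid.one_closed)
  then have "\<psi> \<one>\<^bsub>G\<^esub> = mtrace (1\<^sub>m n)" using rep unfolding ps hecke_rep_def by simp
  then show ?thesis by (metis mtrace_one)
qed

lemma hecke_char_s: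
  assumes cox: "coxeter_system G S" and psi: "\<psi> \<in> hecke_irr_chars G S" and s: "s \<in> S"
  shows "\<exists>a b. \<psi> \<one>\<^bsub>G\<^esub> = of_nat a + of_nat b \<and> \<psi> s = of_nat a * qq - of_nat b"
proof -
  obtain n \<rho> where rep: "hecke_rep G S n \<rho>" and irr: "irreducible_family n (\<rho> ` carrier G)"
      and ps: "\<psi> = (\<lambda>w. if w \<in> carrier G then mtrace (\<rho> w) else 0)"
    using psi unfolding hecke_irr_chars_def by blast
  have n: "n > 0" using irr unfolding irreducible_family_def by simp
  have grp: "group G" and SG: "S \<subseteq> carrier G" and ss: "s \<otimes>\<^bsub>G\<^esub> s = \<one>\<^bsub>G\<^esub>"
    using cox s unfolding coxeter_system_def by auto
  have one: "\<one>\<^bsub>G\<^esub> \<in> carrier G" using grp by (simp add: group.is_monoid monoid.one_closed)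
  have sG: "s \<in> carrier G" using SG s by auto
  have r1: "\<rho> \<one>\<^bsub>G\<^esub> = 1\<^sub>m n" using rep unfolding hecke_rep_def by simp
  have rs: "\<rho> s \<in> carrier_mat n n" using rep sG unfolding hecke_rep_def by simp
  have "\<rho> s * \<rho> s = (if cox_len G S (s \<otimes>\<^bsub>G\<^esub> s) > cox_len G S s then \<rho> (s \<otimes>\<^bsub>G\<^esub> s)
           else qq \<cdot>\<^sub>m \<rho> (s \<otimes>\<^bsub>G\<^esub> s) + (qq - 1) \<cdot>\<^sub>m \<rho> s)"
    using rep s sG unfolding hecke_rep_def by blast
  then have rel: "\<rho> s * \<rho> s = qq \<cdot>\<^sub>m 1\<^sub>m n + (qq - 1) \<cdot>\<^sub>m \<rho> s"
    unfolding ss cox_len_one[OF cox] r1 by simp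
  obtain a b where ab: "a + b = n" and tr: "mtrace (\<rho> s) = of_nat a * qq - of_nat b"
    using trace_quad[OF rs rel n qq_ne(2)] by blast
  have "\<psi> \<one>\<^bsub>G\<^esub> = of_nat a + of_nat b" using one unfolding ps r1 mtrace_one ab[symmetric] by simp
  moreover have "\<psi> s = of_nat a * qq - of_nat b" using sG tr unfolding ps by simp
  ultimately show ?thesis by blast
qed

lemma cst_of_nat: "cst (of_nat n) = of_nat n"
  unfolding cst_def by (simp add: of_nat_fract of_nat_poly)

lemma spec_one:
  assumes "coxeter_system G S" "\<psi> \<in> hecke_irr_chars G S"
  shows "cst (specialize G \<psi> \<one>\<^bsub>G\<^esub>) = \<psi> \<one>\<^bsub>G\<^esub>"
proof -
  obtain n where n: "\<psi> \<one>\<^bsub>G\<^esub> = of_nat n" using hecke_char_one[OF assms] by blast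
  have grp: "group G" using assms(1) unfolding coxeter_system_def by simp
  then have one: "\<one>\<^bsub>G\<^esub> \<in> carrier G" by (simp add: group.is_monoid monoid.one_closed)
  have "\<psi> \<one>\<^bsub>G\<^esub> = Fract [:of_nat n:] 1" unfolding n by (simp add: of_nat_fract of_nat_poly)
  then have "specialize G \<psi> \<one>\<^bsub>G\<^esub> = of_nat n" using spec_val[OF one] by simp
  then show ?thesis using n cst_of_nat by simp
qed

lemma spec_s:
  assumes "coxeter_system G S" "\<psi> \<in> hecke_irr_chars G S" "s \<in> S"
    and "\<psi> s = of_nat a * qq - of_nat b"
  shows "cst (specialize G \<psi> s) = of_nat a - of_nat b"
proof -
  have sG: "s \<in> carrier G" using assms unfolding coxeter_system_def by auto
  have "\<psi> s = Fract (of_nat a * [:0,0,1:] - of_nat b) 1"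
    unfolding assms(4) qq_fract by (simp add: of_nat_fract)
  then have "specialize G \<psi> s = of_nat a - of_nat b" using spec_val[OF sG] by (simp add: of_nat_poly)
  then show ?thesis unfolding cst_def by (simp add: of_nat_fract of_nat_poly)
qed

lemma t1: fixes A B P :: hfield assumes e2: "qq * A - B = 0" and e1: "A + B = P"
  shows "A - B = (1 - qq) * P / (1 + qq)"
proof -
    have B: "B = qq * A" using e2 by simp
    have A1: "(1 + qq) * A = P" using e1 unfolding B by (simp add: algebra_simps)
    have "(1 - qq) * P / (1 + qq) = (1 - qq) * A"
      unfolding A1[symmetric] using qq_ne(1) by simp
    also have "\<dots> = A - B" unfolding B by (simp add: algebra_simps)
    finally show ?thesis by simp
qed

theorem corollary1p2:
  fixes G :: "('a, 'b) monoid_scheme" and S :: "'a set"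
    and d :: "('a \<Rightarrow> complex) \<Rightarrow> hfield"
  assumes cox: "coxeter_system G S"
    and fin: "finite (carrier G)"
    and bij: "bij_betw (specialize G) (hecke_irr_chars G S) (irr_chars G)"
    and gendeg: "\<forall>w\<in>carrier G.
        (\<Sum>\<psi>\<in>hecke_irr_chars G S. \<psi> w * d (specialize G \<psi>))
          = (if w = \<one>\<^bsub>G\<^esub> then poincare G S else 0)"
  shows "gfun G d \<one>\<^bsub>G\<^esub> = poincare G S
       \<and> (\<forall>s\<in>S. gfun G d s = (1 - qq) * poincare G S / (1 + qq))"
proof -
  let ?H = "hecke_irr_chars G S"
  have reidx: "gfun G d w = (\<Sum>\<psi>\<in>?H. cst (specialize G \<psi> w) * d (specialize G \<psi>))" for w
    unfolding gfun_def by (rule sum.reindex_bij_betw[OF bij, of "\<lambda>\<chi>. cst (\<chi> w) * d \<chi>", symmetric])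
  have grp: "group G" using cox unfolding coxeter_system_def by simp
  then have one: "\<one>\<^bsub>G\<^esub> \<in> carrier G" by (simp add: group.is_monoid monoid.one_closed)
  have g1: "(\<Sum>\<psi>\<in>?H. \<psi> \<one>\<^bsub>G\<^esub> * d (specialize G \<psi>)) = poincare G S"
    using bspec[OF gendeg one] by simp
  have part1: "gfun G d \<one>\<^bsub>G\<^esub> = poincare G S"
  proof -
    have "(\<Sum>\<psi>\<in>?H. cst (specialize G \<psi> \<one>\<^bsub>G\<^esub>) * d (specialize G \<psi>)) = (\<Sum>\<psi>\<in>?H. \<psi> \<one>\<^bsub>G\<^esub> * d (specialize G \<psi>))"
      by (rule sum.cong) (simp_all add: spec_one[OF cox])
    then show ?thesis unfolding reidx g1 .
  qed
  have part2: "gfun G d s = (1 - qq) * poincare G S / (1 + qq)" if s: "s \<in> S" for s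
  proof -
    have sG: "s \<in> carrier G" and s1: "s \<noteq> \<one>\<^bsub>G\<^esub>" using cox s unfolding coxeter_system_def by auto
    have "\<forall>\<psi>\<in>?H. \<exists>ab. \<psi> \<one>\<^bsub>G\<^esub> = of_nat (fst ab) + of_nat (snd ab) \<and> \<psi> s = of_nat (fst ab) * qq - of_nat (snd ab)"
    proof
      fix \<psi> assume "\<psi> \<in> ?H"
      then obtain a b where "\<psi> \<one>\<^bsub>G\<^esub> = of_nat a + of_nat b \<and> \<psi> s = of_nat a * qq - of_nat b"
        using hecke_char_s[OF cox _ s] by blast
      then show "\<exists>ab. \<psi> \<one>\<^bsub>G\<^esub> = of_nat (fst ab) + of_nat (snd ab) \<and> \<psi> s = of_nat (fst ab) * qq - of_nat (snd ab)"
        by (intro exI[of _ "(a, b)"]) simp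
    qed
    from bchoice[OF this] obtain f where f: "\<forall>\<psi>\<in>?H. \<psi> \<one>\<^bsub>G\<^esub> = of_nat (fst (f \<psi>)) + of_nat (snd (f \<psi>)) \<and> \<psi> s = of_nat (fst (f \<psi>)) * qq - of_nat (snd (f \<psi>))"
      by blast
    define A where "A = (\<Sum>\<psi>\<in>?H. of_nat (fst (f \<psi>)) * d (specialize G \<psi>))"
    define B where "B = (\<Sum>\<psi>\<in>?H. of_nat (snd (f \<psi>)) * d (specialize G \<psi>))"
    have e1: "A + B = poincare G S"
    proof -
      have "(\<Sum>\<psi>\<in>?H. \<psi> \<one>\<^bsub>G\<^esub> * d (specialize G \<psi>)) = (\<Sum>\<psi>\<in>?H. of_nat (fst (f \<psi>)) * d (specialize G \<psi>) + of_nat (snd (f \<psi>)) * d (specialize G \<psi>))"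
      proof (rule sum.cong)
        fix x assume "x \<in> ?H"
        then have "x \<one>\<^bsub>G\<^esub> = of_nat (fst (f x)) + of_nat (snd (f x))" using f by blast
        then show "x \<one>\<^bsub>G\<^esub> * d (specialize G x) = of_nat (fst (f x)) * d (specialize G x) + of_nat (snd (f x)) * d (specialize G x)"
          by (simp add: distrib_right)
      qed simp
      then have "poincare G S = A + B" unfolding g1 A_def B_def sum.distrib .
      then show ?thesis by simp
    qed
    have e2: "qq * A - B = 0"
    proof -
      have z: "(\<Sum>\<psi>\<in>?H. \<psi> s * d (specialize G \<psi>)) = 0" using bspec[OF gendeg sG] s1 by simp
      have eq: "(\<Sum>\<psi>\<in>?H. \<psi> s * d (specialize G \<psi>)) = (\<Sum>\<psi>\<in>?H. qq * (of_nat (fst (f \<psi>)) * d (specialize G \<psi>)) - of_nat (snd (f \<psi>)) * d (specialize G \<psi>))"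
      proof (rule sum.cong)
        fix x assume "x \<in> ?H"
        then have xs: "x s = of_nat (fst (f x)) * qq - of_nat (snd (f x))" using f by blast
        show "x s * d (specialize G x) = qq * (of_nat (fst (f x)) * d (specialize G x)) - of_nat (snd (f x)) * d (specialize G x)"
          unfolding xs by (simp add: algebra_simps)
      qed simp
      have "qq * A - B = (\<Sum>\<psi>\<in>?H. qq * (of_nat (fst (f \<psi>)) * d (specialize G \<psi>)) - of_nat (snd (f \<psi>)) * d (specialize G \<psi>))"
        unfolding A_def B_def sum_subtractf sum_distrib_left ..
      also have "\<dots> = 0" using eq z by simp
      finally show ?thesis .
    qed
    have e3: "gfun G d s = A - B"
    proof -
      have "gfun G d s = (\<Sum>\<psi>\<in>?H. of_nat (fst (f \<psi>)) * d (specialize G \<psi>) - of_nat (snd (f \<psi>)) * d (specialize G \<psi>))"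
        unfolding reidx
      proof (rule sum.cong)
        fix x assume x: "x \<in> ?H"
        then have "x s = of_nat (fst (f x)) * qq - of_nat (snd (f x))" using f by blast
        then have cs: "cst (specialize G x s) = of_nat (fst (f x)) - of_nat (snd (f x))"
          using spec_s[OF cox x s] by blast
        then show "cst (specialize G x s) * d (specialize G x) = of_nat (fst (f x)) * d (specialize G x) - of_nat (snd (f x)) * d (specialize G x)"
          unfolding cs by (simp add: algebra_simps)
      qed simp
      then show ?thesis unfolding A_def B_def sum_subtractf .
    qed
    show ?thesis unfolding e3 by (rule t1[OF e2 e1])
  qed
  show ?thesis using part1 part2 by blast
qed

end
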